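(* Let $\mathbb{F} = \mathbb{F}_0(\omega)$ be a degree-$2$ extension field of a field $\mathbb{F}_0$. Let $h,d,m,n$ be nonnegative integers satisfying $0 \le h \le d \le n$, and let $A,B \in \mathbb{F}_0^{d \times n}$ and $P \in \mathbb{F}_0^{m \times n}$ be such that $\operatorname{rank}\begin{pmatrix} A+\omega B \\ P \end{pmatrix} = m+d$, $\operatorname{rank}(P) = m$ and $\operatorname{rank}\begin{pmatrix} A \\ B \\ P \end{pmatrix} \le m+2d-h$. Then there exist matrices $A',B' \in \mathbb{F}_0^{d \times n}$ such that $\begin{pmatrix} A+\omega B \\ P \end{pmatrix}$ and $\begin{pmatrix} A'+\omega B' \\ P \end{pmatrix}$ are row-equivalent and $B'$ has $h$ zero rows.
   Context: Here $\begin{pmatrix} X \\ Y \end{pmatrix}$ denotes the matrix obtained by stacking $X$ on top of $Y$. Row-equivalence means one matrix is obtained from the other by elementary row operations (over $\mathbb{F}$). *)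

theory Defs
  imports "Jordan_Normal_Form.Gauss_Jordan_Elimination" "Jordan_Normal_Form.DL_Rank"
begin

definition is_subfield :: "'a::field set \<Rightarrow> bool" where
  "is_subfield K \<longleftrightarrow> 0 \<in> K \<and> 1 \<in> K \<and>
     (\<forall>x\<in>K. \<forall>y\<in>K. x + y \<in> K \<and> x * y \<in> K) \<and>
     (\<forall>x\<in>K. - x \<in> K) \<and> (\<forall>x\<in>K. x \<noteq> 0 \<longrightarrow> inverse x \<in> K)"

text \<open>The whole field type 'a is the degree-2 extension K(w) of the subfield K.\<close>
definition degree2_extension :: "'a::field set \<Rightarrow> 'a \<Rightarrow> bool" where
  "degree2_extension K w \<longleftrightarrow> is_subfield K \<and> w \<notin> K \<and>
     (\<forall>x. \<exists>a\<in>K. \<exists>b\<in>K. x = a + w * b)"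

inductive elem_row_op :: "'a::field mat \<Rightarrow> 'a mat \<Rightarrow> bool" where
  swap: "k < dim_row M \<Longrightarrow> l < dim_row M \<Longrightarrow> elem_row_op M (swaprows k l M)"
| mult: "k < dim_row M \<Longrightarrow> a \<noteq> 0 \<Longrightarrow> elem_row_op M (multrow k a M)"
| add: "k < dim_row M \<Longrightarrow> l < dim_row M \<Longrightarrow> k \<noteq> l \<Longrightarrow> elem_row_op M (addrow a k l M)"

definition row_equivalent :: "'a::field mat \<Rightarrow> 'a mat \<Rightarrow> bool" where
  "row_equivalent M N \<longleftrightarrow> elem_row_op\<^sup>*\<^sup>* M N"

definition mrank :: "'a::field mat \<Rightarrow> nat" where
  "mrank A = vec_space.rank (dim_row A) A"

end

theory Submission
  imports Defs
begin


lemma kv: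
  fixes W :: "'a::field vec set"
  assumes W: "W \<subseteq> carrier_vec r" "finite W" "card W < r"
  shows "\<exists>y\<in>carrier_vec r. y \<noteq> 0\<^sub>v r \<and> (\<forall>w\<in>W. w \<bullet> y = 0)"
proof -
  obtain ws where ws: "set ws = W" "distinct ws" using finite_distinct_list[OF W(2)] by blast
  have len: "length ws < r" using ws W(3) distinct_card by fastforce
  define c where "c = (\<lambda>i. if i < length ws then ws ! i else 0\<^sub>v r)"
  have c: "c \<in> {0..<r} \<rightarrow> carrier_vec r" unfolding c_def using ws W(1) nth_mem by fastforce
  define Q where "Q = mat\<^sub>r r r (\<lambda>i. if i = r - 1 then 0\<^sub>v r else c i)"
  have Qc: "Q \<in> carrier_mat r r" unfolding Q_def by auto
  have "det Q = 0" unfolding Q_def by (rule det_row_0[OF _ c], insert len, auto)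
  then obtain v where v: "v \<in> carrier_vec r" "v \<noteq> 0\<^sub>v r" "Q *\<^sub>v v = 0\<^sub>v r"
    using det_0_iff_vec_prod_zero[OF Qc] by blast
  have "\<forall>w\<in>W. w \<bullet> v = 0"
  proof
    fix w assume "w \<in> W"
    then obtain p where p: "p < length ws" "w = ws ! p" using ws by (metis in_set_conv_nth)
    have wc: "w \<in> carrier_vec r" using p ws W(1) nth_mem by blast
    have "(Q *\<^sub>v v) $ p = row Q p \<bullet> v" using p len Qc by auto
    also have "row Q p = w" unfolding Q_def using p len wc
      by (subst row_mat_of_row_fun, auto simp: c_def)
    finally show "w \<bullet> v = 0" using v p len by auto
  qed
  thus ?thesis using v by blast
qed

lemma max_indep_cols:
  fixes X :: "'a::field mat"
  assumes X: "X \<in> carrier_mat r c"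
  shows "\<exists>U. finite U \<and> U \<subseteq> set (cols X) \<and> LinearCombinations.module.lin_indpt class_ring (module_vec TYPE('a) r) U
     \<and> card U = mrank X \<and> set (cols X) \<subseteq> LinearCombinations.module.span class_ring (module_vec TYPE('a) r) U"
proof -
  interpret vec_space "TYPE('a)" r .
  let ?P = "\<lambda>T. T \<subseteq> set (cols X) \<and> lin_indpt T"
  have P0: "?P {}" by (auto simp: lin_dep_def)
  obtain U where U: "finite U" "maximal U ?P"
    using maximal_exists_superset[of "set (cols X)" ?P "{}", OF _ _ P0] by blast
  have rk: "mrank X = card U" unfolding mrank_def using rank_card_indpt[OF _ U(2)] X by auto
  have Us: "U \<subseteq> set (cols X)" "lin_indpt U" using U(2) unfolding maximal_def by auto
  have colsC: "set (cols X) \<subseteq> carrier_vec r" using X cols_dim by blast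
  have "set (cols X) \<subseteq> span U"
  proof
    fix s assume s: "s \<in> set (cols X)"
    show "s \<in> span U"
    proof (cases "s \<in> U")
      case True thus ?thesis using in_own_span[of U] Us colsC by auto
    next
      case False
      have "\<not> ?P (U \<union> {s})"
      proof
        assume "?P (U \<union> {s})"
        hence "U \<union> {s} = U" using U(2) unfolding maximal_def by blast
        thus False using False by auto
      qed
      hence "lin_dep (U \<union> {s})" using Us s by auto
      thus ?thesis using lin_dep_iff_in_span[of U s] Us colsC s False by auto
    qed
  qed
  thus ?thesis using U Us rk by auto
qed



lemma rank_fact:
  fixes X :: "'a::field mat"
  assumes X: "X \<in> carrier_mat r c"
  shows "\<exists>k C D. k \<le> mrank X \<and> C \<in> carrier_mat r k \<and> D \<in> carrier_mat k c \<and> X = C * D"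
proof -
  interpret vec_space "TYPE('a)" r .
  obtain U where U: "finite U" "U \<subseteq> set (cols X)" "lin_indpt U" "card U = mrank X" "set (cols X) \<subseteq> span U"
    using max_indep_cols[OF X] by blast
  obtain us where us: "set us = U" "distinct us" using finite_distinct_list[OF U(1)] by blast
  have colsC: "set (cols X) \<subseteq> carrier_vec r" using X cols_dim by blast
  have usC: "set us \<subseteq> carrier_vec r" using us U(2) colsC by auto
  define k where "k = length us"
  have k: "k = mrank X" using us U(4) distinct_card unfolding k_def by fastforce
  define C where "C = mat_of_cols r us"
  have Cc: "C \<in> carrier_mat r k" unfolding C_def k_def by auto
  have "\<forall>j<c. \<exists>f. f \<in> carrier_vec k \<and> col X j = C *\<^sub>v f"
  proof (intro allI impI)
    fix j assume j: "j < c"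
    have "col X j \<in> set (cols X)" using j X by (auto simp: cols_def)
    hence "col X j \<in> span_list us" using U(5) us span_list_as_span[OF usC] by auto
    then obtain cf where "col X j = lincomb_list cf us" by (metis in_span_listE)
    also have "\<dots> = C *\<^sub>v vec k cf" unfolding C_def k_def
      by (rule lincomb_list_as_mat_mult, insert usC, auto)
    finally have "col X j = C *\<^sub>v vec k cf" .
    moreover have "vec k cf \<in> carrier_vec k" by auto
    ultimately show "\<exists>f. f \<in> carrier_vec k \<and> col X j = C *\<^sub>v f" by blast
  qed
  then obtain f where f: "\<And>j. j < c \<Longrightarrow> f j \<in> carrier_vec k \<and> col X j = C *\<^sub>v f j" by metis
  define D where "D = mat k c (\<lambda>(l,j). f j $ l)"
  have Dc: "D \<in> carrier_mat k c" unfolding D_def by auto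
  have "X = C * D"
  proof (rule eq_matI)
    fix i j assume i: "i < dim_row (C * D)" and j: "j < dim_col (C * D)"
    hence ij: "i < r" "j < c" using Cc Dc by auto
    have "col D j = f j" using f[OF ij(2)] ij unfolding D_def by auto
    hence "(C * D) $$ (i,j) = (C *\<^sub>v f j) $ i" using ij Cc Dc by auto
    also have "\<dots> = col X j $ i" using f[OF ij(2)] by simp
    also have "\<dots> = X $$ (i,j)" using ij X by auto
    finally show "X $$ (i,j) = (C * D) $$ (i,j)" by simp
  qed (insert X Cc Dc, auto)
  thus ?thesis using k Cc Dc by blast
qed

lemma full_rank_left:
  fixes X :: "'a::field mat"
  assumes X: "X \<in> carrier_mat r c" and rk: "mrank X = r"
    and y: "y \<in> carrier_vec r" and yc: "\<And>j. j < c \<Longrightarrow> col X j \<bullet> y = 0"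
  shows "y = 0\<^sub>v r"
proof -
  interpret vec_space "TYPE('a)" r .
  obtain U where U: "finite U" "U \<subseteq> set (cols X)" "lin_indpt U" "card U = mrank X"
    using max_indep_cols[OF X] by blast
  have colsC: "set (cols X) \<subseteq> carrier_vec r" using X cols_dim by blast
  have UC: "U \<subseteq> carrier_vec r" using U colsC by auto
  have "basis U" by (rule dim_li_is_basis, insert U UC rk, auto simp: dim_is_n)
  hence sp: "span U = carrier_vec r" unfolding basis_def by auto
  have "y \<in> orthogonal_complement U"
    unfolding orthogonal_complement_def
  proof (intro CollectI conjI ballI)
    fix u assume "u \<in> U"
    then obtain j where j: "j < c" "u = col X j" using U(2) X
      by (auto simp: cols_def)
    show "y \<bullet> u = 0" using yc[OF j(1)] j comm_scalar_prod[OF y, of u] X by auto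
  qed (rule y)
  hence yo: "y \<in> orthogonal_complement (span U)" using in_orthogonal_complement_span[OF UC] by simp
  show ?thesis
  proof (rule eq_vecI)
    fix i assume "i < dim_vec (0\<^sub>v r)"
    hence i: "i < r" by auto
    have "unit_vec r i \<in> span U" unfolding sp using i by auto
    hence "y \<bullet> unit_vec r i = 0" using yo unfolding orthogonal_complement_def by auto
    thus "y $ i = 0\<^sub>v r $ i" using i y comm_scalar_prod[OF y, of "unit_vec r i"] by auto
  qed (insert y, auto)
qed



definition lind :: "'a::field mat \<Rightarrow> bool" where
  "lind M \<longleftrightarrow> (\<forall>y\<in>carrier_vec (dim_row M).
      (\<forall>j<dim_col M. (\<Sum>q<dim_row M. y $ q * M $$ (q,j)) = 0) \<longrightarrow> y = 0\<^sub>v (dim_row M))"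

lemma full_rank_lind:
  fixes X :: "'a::field mat"
  assumes X: "X \<in> carrier_mat r c" and rk: "mrank X = r"
  shows "lind X"
  unfolding lind_def
proof (intro ballI impI)
  fix y :: "'a vec" assume y: "y \<in> carrier_vec (dim_row X)"
    and h: "\<forall>j<dim_col X. (\<Sum>q<dim_row X. y $ q * X $$ (q,j)) = 0"
  have y': "y \<in> carrier_vec r" using y X by auto
  have "y = 0\<^sub>v r"
  proof (rule full_rank_left[OF X rk y'])
    fix j assume j: "j < c"
    have "col X j \<bullet> y = (\<Sum>q\<in>{0..<r}. X $$ (q,j) * y $ q)"
      unfolding scalar_prod_def using y' X j by auto
    also have "\<dots> = (\<Sum>q<dim_row X. y $ q * X $$ (q,j))"
      using X by (auto simp: atLeast0LessThan mult.commute)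
    finally show "col X j \<bullet> y = 0" using h j X by auto
  qed
  thus "y = 0\<^sub>v (dim_row X)" using X by auto
qed

definition repl_row :: "'a::field mat \<Rightarrow> nat \<Rightarrow> (nat \<Rightarrow> 'a) \<Rightarrow> 'a mat" where
  "repl_row M i g = mat (dim_row M) (dim_col M)
     (\<lambda>(p,j). if p = i then (\<Sum>q<dim_row M. g q * M $$ (q,j)) else M $$ (p,j))"

lemma row_replace:
  fixes M :: "'a::field mat"
  assumes M: "M \<in> carrier_mat r c" and i: "i < r" and gi: "g i \<noteq> 0"
  shows "row_equivalent M (repl_row M i g)"
proof -
  define M0 where "M0 = multrow i (g i) M"
  have s0: "elem_row_op M M0" unfolding M0_def using elem_row_op.mult[of i M "g i"] i M gi by auto
  define MS where "MS = (\<lambda>S. mat r c (\<lambda>(p,j). if p = i then g i * M $$ (i,j) + (\<Sum>q\<in>S. g q * M $$ (q,j))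
       else M $$ (p,j)))"
  have gen: "finite S \<Longrightarrow> S \<subseteq> {..<r} - {i} \<Longrightarrow> elem_row_op\<^sup>*\<^sup>* M0 (MS S)" for S
  proof (induction S rule: finite_induct)
    case empty
    have "M0 = MS {}" unfolding M0_def MS_def by (rule eq_matI, insert M, auto)
    thus ?case by simp
  next
    case (insert q S)
    hence IH: "elem_row_op\<^sup>*\<^sup>* M0 (MS S)" and q: "q < r" "q \<noteq> i" by auto
    have "elem_row_op (MS S) (addrow (g q) i q (MS S))"
      by (rule elem_row_op.add, insert i q, auto simp: MS_def)
    moreover have "addrow (g q) i q (MS S) = MS (insert q S)"
      by (rule eq_matI, insert insert(1,2) q i, auto simp: MS_def algebra_simps)
    ultimately show ?case using IH by (metis rtranclp.rtrancl_into_rtrancl)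
  qed
  have "elem_row_op\<^sup>*\<^sup>* M0 (MS ({..<r} - {i}))" by (rule gen, auto)
  moreover have "MS ({..<r} - {i}) = repl_row M i g"
  proof (rule eq_matI)
    fix p j assume "p < dim_row (repl_row M i g)" "j < dim_col (repl_row M i g)"
    hence pj: "p < r" "j < c" using M by (auto simp: repl_row_def)
    have "(\<Sum>q<r. g q * M $$ (q,j)) = g i * M $$ (i,j) + (\<Sum>q\<in>{..<r} - {i}. g q * M $$ (q,j))"
      by (rule sum.remove, insert i, auto)
    thus "MS ({..<r} - {i}) $$ (p,j) = repl_row M i g $$ (p,j)"
      using pj M unfolding MS_def repl_row_def by auto
  qed (insert M, auto simp: MS_def repl_row_def)
  ultimately show ?thesis unfolding row_equivalent_def using s0
    by (metis converse_rtranclp_into_rtranclp)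
qed

lemma lind_replace:
  fixes M :: "'a::field mat"
  assumes M: "M \<in> carrier_mat r c" and i: "i < r" and gi: "g i \<noteq> 0" and L: "lind M"
  shows "lind (repl_row M i g)"
  unfolding lind_def
proof (intro ballI impI)
  let ?M1 = "repl_row M i g"
  have dims: "dim_row ?M1 = r" "dim_col ?M1 = c" using M by (auto simp: repl_row_def)
  fix y :: "'a vec" assume y: "y \<in> carrier_vec (dim_row ?M1)"
    and h: "\<forall>j<dim_col ?M1. (\<Sum>q<dim_row ?M1. y $ q * ?M1 $$ (q,j)) = 0"
  define y' where "y' = vec r (\<lambda>q. (if q = i then 0 else y $ q) + y $ i * g q)"
  have "\<forall>j<c. (\<Sum>q<r. y' $ q * M $$ (q,j)) = 0"
  proof (intro allI impI)
    fix j assume j: "j < c"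
    have "(\<Sum>q<r. y' $ q * M $$ (q,j)) = (\<Sum>q<r. (if q = i then 0 else y $ q * M $$ (q,j)) + y $ i * (g q * M $$ (q,j)))"
      by (rule sum.cong, auto simp: y'_def algebra_simps)
    also have "\<dots> = (\<Sum>q<r. (if q = i then 0 else y $ q * M $$ (q,j))) + y $ i * (\<Sum>q<r. g q * M $$ (q,j))"
      by (simp add: sum.distrib sum_distrib_left)
    also have "\<dots> = (\<Sum>q<r. (if q = i then 0 else y $ q * M $$ (q,j)) + (if q = i then y $ i * (\<Sum>q<r. g q * M $$ (q,j)) else 0))"
      using i by (simp add: sum.distrib)
    also have "\<dots> = (\<Sum>q<r. y $ q * ?M1 $$ (q,j))"
      by (rule sum.cong, insert j M, auto simp: repl_row_def)
    also have "\<dots> = 0" using h j dims by auto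
    finally show "(\<Sum>q<r. y' $ q * M $$ (q,j)) = 0" .
  qed
  hence y0: "y' = 0\<^sub>v r" using L M unfolding lind_def by (auto simp: y'_def)
  hence "y' $ i = 0" using i by auto
  hence yi: "y $ i = 0" using i gi by (auto simp: y'_def)
  show "y = 0\<^sub>v (dim_row ?M1)"
  proof (rule eq_vecI)
    fix q assume "q < dim_vec (0\<^sub>v (dim_row ?M1))"
    hence q: "q < r" using dims by auto
    have "y' $ q = 0" using y0 q by auto
    thus "y $ q = 0\<^sub>v (dim_row ?M1) $ q" using q yi dims by (auto simp: y'_def split: if_splits)
  qed (insert y, auto)
qed

lemma append_rows_index:
  assumes A: "A \<in> carrier_mat nr1 nc" and B: "B \<in> carrier_mat nr2 nc"
    and i: "i < nr1 + nr2" and j: "j < nc"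
  shows "(A @\<^sub>r B) $$ (i,j) = (if i < nr1 then A $$ (i,j) else B $$ (i - nr1, j))"
  using A B i j unfolding append_rows_def by auto



lemma elements_sub_iff:
  assumes "A \<in> carrier_mat nr nc"
  shows "elements_mat A \<subseteq> K \<longleftrightarrow> (\<forall>i<nr. \<forall>j<nc. A $$ (i,j) \<in> K)"
  using assms by (auto dest!: elements_matD)

lemma sum_split_add:
  fixes a b :: nat shows "(\<Sum>q<a+b. f q) = (\<Sum>q<a. f q) + (\<Sum>p<b. f (a+p))"
  by (induction b, auto simp: add_ac)

locale d2ext =
  fixes K :: "'a::field set" and w :: 'a
  assumes ext: "degree2_extension K w"
begin

lemma sf: "is_subfield K" and wK: "w \<notin> K" and dec: "\<And>x. \<exists>a\<in>K. \<exists>b\<in>K. x = a + w * b"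
  using ext unfolding degree2_extension_def by auto

lemma K0[simp]: "0 \<in> K" and K1[simp]: "1 \<in> K"
  using sf unfolding is_subfield_def by auto

lemma Kadd[simp]: "x \<in> K \<Longrightarrow> y \<in> K \<Longrightarrow> x + y \<in> K"
  and Kmult[simp]: "x \<in> K \<Longrightarrow> y \<in> K \<Longrightarrow> x * y \<in> K"
  and Kuminus[simp]: "x \<in> K \<Longrightarrow> - x \<in> K"
  using sf unfolding is_subfield_def by auto

lemma Kdiff[simp]: "x \<in> K \<Longrightarrow> y \<in> K \<Longrightarrow> x - y \<in> K"
  using Kadd[of x "- y"] Kuminus[of y] by simp

lemma Kinv: "x \<in> K \<Longrightarrow> inverse x \<in> K"
  using sf unfolding is_subfield_def by (cases "x = 0", auto)

lemma Ksum[simp]: "(\<And>x. x \<in> S \<Longrightarrow> f x \<in> K) \<Longrightarrow> sum f S \<in> K"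
proof (induction S rule: infinite_finite_induct)
qed auto

lemma uniq:
  assumes "a \<in> K" "b \<in> K" "a' \<in> K" "b' \<in> K" "a + w * b = a' + w * b'"
  shows "a = a' \<and> b = b'"
proof (cases "b = b'")
  case True thus ?thesis using assms by auto
next
  case False
  hence ne: "b' - b \<noteq> 0" by auto
  have "w * (b' - b) = a - a'" using assms(5) by (simp add: algebra_simps)
  hence "w = (a - a') * inverse (b' - b)" using ne by (simp add: field_simps)
  moreover have "(a - a') * inverse (b' - b) \<in> K" using assms Kinv by simp
  ultimately show ?thesis using wK by simp
qed

lemma uniq0:
  assumes "a \<in> K" "b \<in> K" "a + w * b = 0"
  shows "a = 0 \<and> b = 0"
  using uniq[OF assms(1,2) K0 K0] assms(3) by simp

end



context d2ext
begin

lemma kernel_K: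
  fixes N :: "'a mat" and r n :: nat and Z :: "nat set"
  assumes N: "N \<in> carrier_mat r n" "\<forall>q<r. \<forall>j<n. N $$ (q,j) \<in> K"
    and y0: "y0 \<in> carrier_vec r" "y0 \<noteq> 0\<^sub>v r"
    and ker: "\<forall>j<n. (\<Sum>q<r. y0 $ q * N $$ (q,j)) = 0"
    and zr: "\<forall>q\<in>Z. y0 $ q = 0"
  shows "\<exists>Y. (\<forall>q<r. Y q \<in> K) \<and> (\<exists>q<r. Y q \<noteq> 0) \<and> (\<forall>j<n. (\<Sum>q<r. Y q * N $$ (q,j)) = 0)
     \<and> (\<forall>q\<in>Z. Y q = 0)"
proof -
  obtain re im where ri: "\<And>x. re x \<in> K \<and> im x \<in> K \<and> x = re x + w * im x"
    using dec by metis
  have reK[simp]: "re x \<in> K" and imK[simp]: "im x \<in> K" for x using ri by auto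
  let ?Y1 = "\<lambda>q. re (y0 $ q)" and ?Y2 = "\<lambda>q. im (y0 $ q)"
  have k12: "\<forall>j<n. (\<Sum>q<r. ?Y1 q * N $$ (q,j)) = 0 \<and> (\<Sum>q<r. ?Y2 q * N $$ (q,j)) = 0"
  proof (intro allI impI)
    fix j assume j: "j < n"
    have "(\<Sum>q<r. y0 $ q * N $$ (q,j)) = (\<Sum>q<r. ?Y1 q * N $$ (q,j) + w * (?Y2 q * N $$ (q,j)))"
      by (rule sum.cong[OF refl], subst ri, simp add: algebra_simps)
    also have "\<dots> = (\<Sum>q<r. ?Y1 q * N $$ (q,j)) + w * (\<Sum>q<r. ?Y2 q * N $$ (q,j))"
      by (simp add: sum.distrib sum_distrib_left)
    finally have "(\<Sum>q<r. ?Y1 q * N $$ (q,j)) + w * (\<Sum>q<r. ?Y2 q * N $$ (q,j)) = 0"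
      using ker j by auto
    moreover have "(\<Sum>q<r. ?Y1 q * N $$ (q,j)) \<in> K"
      using N(2) j by (intro Ksum Kmult reK, auto)
    moreover have "(\<Sum>q<r. ?Y2 q * N $$ (q,j)) \<in> K"
      using N(2) j by (intro Ksum Kmult imK, auto)
    ultimately show "(\<Sum>q<r. ?Y1 q * N $$ (q,j)) = 0 \<and> (\<Sum>q<r. ?Y2 q * N $$ (q,j)) = 0"
      using uniq0 by blast
  qed
  have z12: "\<forall>q\<in>Z. ?Y1 q = 0 \<and> ?Y2 q = 0"
  proof
    fix q assume "q \<in> Z"
    hence "?Y1 q + w * ?Y2 q = 0" using zr ri[of "y0 $ q"] by auto
    thus "?Y1 q = 0 \<and> ?Y2 q = 0" using uniq0 reK imK by blast
  qed
  have "\<exists>q<r. y0 $ q \<noteq> 0"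
  proof (rule ccontr)
    assume "\<not> ?thesis"
    hence "y0 = 0\<^sub>v r" using y0(1) by (intro eq_vecI, auto)
    thus False using y0(2) by simp
  qed
  then obtain q where q: "q < r" "y0 $ q \<noteq> 0" by blast
  hence "?Y1 q \<noteq> 0 \<or> ?Y2 q \<noteq> 0" using ri[of "y0 $ q"] by auto
  thus ?thesis
  proof
    assume "?Y1 q \<noteq> 0"
    thus ?thesis using k12 z12 q by (intro exI[of _ ?Y1], auto)
  next
    assume "?Y2 q \<noteq> 0"
    thus ?thesis using k12 z12 q by (intro exI[of _ ?Y2], auto)
  qed
qed

end


lemma alg_id:
  fixes w c0 c1 u v a b :: "'a::field"
  assumes ww: "w * w = c0 + w * c1"
  shows "(v - c1*u + w*u) * (a + w*b) = ((v - c1*u)*a + c0*u*b) + w*(u*a + v*b)"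
proof -
  have "(v - c1*u + w*u) * (a + w*b) - (((v - c1*u)*a + c0*u*b) + w*(u*a + v*b))
     = u * b * (w * w - c0 - w * c1)" by (simp add: algebra_simps)
  also have "\<dots> = 0" using ww by simp
  finally show ?thesis by simp
qed

lemma kernel_factor:
  fixes C D :: "'a::field mat"
  assumes C: "C \<in> carrier_mat r R" and D: "D \<in> carrier_mat R n"
    and y0: "y0 \<in> carrier_vec r" and o: "\<forall>l<R. col C l \<bullet> y0 = 0"
  shows "\<forall>j<n. (\<Sum>q<r. y0 $ q * (C * D) $$ (q,j)) = 0"
proof (intro allI impI)
  fix j assume j: "j < n"
  have "(\<Sum>q<r. y0 $ q * (C * D) $$ (q,j)) = (\<Sum>q<r. \<Sum>l<R. y0 $ q * (C $$ (q,l) * D $$ (l,j)))"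
    by (rule sum.cong[OF refl], insert C D j, auto simp: scalar_prod_def sum_distrib_left atLeast0LessThan)
  also have "\<dots> = (\<Sum>l<R. \<Sum>q<r. y0 $ q * (C $$ (q,l) * D $$ (l,j)))" by (rule sum.swap)
  also have "\<dots> = (\<Sum>l<R. (col C l \<bullet> y0) * D $$ (l,j))"
    by (rule sum.cong[OF refl], insert C y0, auto simp: scalar_prod_def sum_distrib_left atLeast0LessThan mult_ac)
  also have "\<dots> = 0" using o by auto
  finally show "(\<Sum>q<r. y0 $ q * (C * D) $$ (q,j)) = 0" .
qed

lemma N_index:
  assumes A: "A \<in> carrier_mat d n" and B: "B \<in> carrier_mat d n" and P: "P \<in> carrier_mat m n"
    and q: "q < d + d + m" and j: "j < n"
  shows "(A @\<^sub>r B @\<^sub>r P) $$ (q,j) = (if q < d then A $$ (q,j) else if q < d + d then B $$ (q - d, j)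
     else P $$ (q - d - d, j))"
proof -
  have BP: "B @\<^sub>r P \<in> carrier_mat (d + m) n" using B P by auto
  show ?thesis
    using append_rows_index[OF A BP, of q j] append_rows_index[OF B P, of "q - d" j] q j by auto
qed

lemma N_sum:
  fixes Y :: "nat \<Rightarrow> 'a::field"
  assumes A: "A \<in> carrier_mat d n" and B: "B \<in> carrier_mat d n" and P: "P \<in> carrier_mat m n"
    and j: "j < n"
  shows "(\<Sum>q<d+d+m. Y q * (A @\<^sub>r B @\<^sub>r P) $$ (q,j)) =
    (\<Sum>l<d. Y l * A $$ (l,j)) + (\<Sum>l<d. Y (d+l) * B $$ (l,j)) + (\<Sum>p<m. Y (d+d+p) * P $$ (p,j))"
  unfolding sum_split_add
  by (auto simp: N_index[OF A B P _ j] intro!: sum.cong)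

lemma M_index:
  assumes A: "A \<in> carrier_mat d n" and P: "P \<in> carrier_mat m n"
    and q: "q < d + m" and j: "j < n"
  shows "(A @\<^sub>r P) $$ (q,j) = (if q < d then A $$ (q,j) else P $$ (q - d, j))"
  using append_rows_index[OF A P q j] .

lemma M_sum:
  fixes Y :: "nat \<Rightarrow> 'a::field"
  assumes A: "A \<in> carrier_mat d n" and P: "P \<in> carrier_mat m n"
    and j: "j < n"
  shows "(\<Sum>q<d+m. Y q * (A @\<^sub>r P) $$ (q,j)) =
    (\<Sum>l<d. Y l * A $$ (l,j)) + (\<Sum>p<m. Y (d+p) * P $$ (p,j))"
  unfolding sum_split_add
  by (auto simp: M_index[OF A P _ j] intro!: sum.cong)



context d2ext
begin

lemma one_step:
  fixes A B P C D :: "'a mat" and d m n R :: nat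
  assumes A: "A \<in> carrier_mat d n" "\<forall>i<d. \<forall>j<n. A $$ (i,j) \<in> K"
    and B: "B \<in> carrier_mat d n" "\<forall>i<d. \<forall>j<n. B $$ (i,j) \<in> K"
    and P: "P \<in> carrier_mat m n" "\<forall>i<m. \<forall>j<n. P $$ (i,j) \<in> K"
    and L: "lind ((A + w \<cdot>\<^sub>m B) @\<^sub>r P)"
    and C: "C \<in> carrier_mat (d+d+m) R" and D: "D \<in> carrier_mat R n"
    and ND: "A @\<^sub>r B @\<^sub>r P = C * D"
    and cnt: "R + card {i. i<d \<and> row B i = 0\<^sub>v n} < d+d+m"
  shows "\<exists>A1 B1 C1. A1 \<in> carrier_mat d n \<and> (\<forall>i<d. \<forall>j<n. A1 $$ (i,j) \<in> K) \<and>
     B1 \<in> carrier_mat d n \<and> (\<forall>i<d. \<forall>j<n. B1 $$ (i,j) \<in> K) \<and>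
     lind ((A1 + w \<cdot>\<^sub>m B1) @\<^sub>r P) \<and> C1 \<in> carrier_mat (d+d+m) R \<and> A1 @\<^sub>r B1 @\<^sub>r P = C1 * D \<and>
     row_equivalent ((A + w \<cdot>\<^sub>m B) @\<^sub>r P) ((A1 + w \<cdot>\<^sub>m B1) @\<^sub>r P) \<and>
     card {i. i<d \<and> row B1 i = 0\<^sub>v n} = Suc (card {i. i<d \<and> row B i = 0\<^sub>v n})"
proof -
  let ?r = "d+d+m"
  define Z where "Z = {i. i<d \<and> row B i = 0\<^sub>v n}"
  have Zfin: "finite Z" unfolding Z_def by auto
  have Zd: "\<forall>l\<in>Z. l < d" unfolding Z_def by auto
  have BZ: "\<forall>l\<in>Z. \<forall>j<n. B $$ (l,j) = 0"
  proof (intro ballI allI impI)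
    fix l j assume l: "l \<in> Z" and j: "j < n"
    hence "row B l $ j = 0" unfolding Z_def using j by auto
    moreover have "row B l $ j = B $$ (l,j)" using l j B(1) unfolding Z_def by (intro index_row, auto)
    ultimately show "B $$ (l,j) = 0" by simp
  qed
  define N where "N = A @\<^sub>r B @\<^sub>r P"
  have Nc: "N \<in> carrier_mat ?r n" unfolding N_def using A B P
    by (metis add.assoc carrier_append_rows)
  have NK: "\<forall>q<?r. \<forall>j<n. N $$ (q,j) \<in> K"
    unfolding N_def using A B P by (auto simp: N_index)
  define W where "W = set (cols C) \<union> (\<lambda>i. unit_vec ?r (d+i)) ` Z"
  have "set (cols C) \<subseteq> carrier_vec ?r" using C cols_dim[of C] by auto
  hence WC: "W \<subseteq> carrier_vec ?r" unfolding W_def by auto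
  have Wf: "finite W" unfolding W_def using Zfin by auto
  have "card W \<le> card (set (cols C)) + card ((\<lambda>i. unit_vec ?r (d+i) :: 'a vec) ` Z)"
    unfolding W_def using card_Un_le by blast
  also have "\<dots> \<le> R + card Z"
    using card_length[of "cols C"] card_image_le[OF Zfin, of "\<lambda>i. unit_vec ?r (d+i) :: 'a vec"] C by auto
  finally have Wcard: "card W < ?r" using cnt unfolding Z_def by auto
  obtain y0 where y0: "y0 \<in> carrier_vec ?r" "y0 \<noteq> 0\<^sub>v ?r" "\<forall>v\<in>W. v \<bullet> y0 = 0"
    using kv[OF WC Wf Wcard] by blast
  have ker0: "\<forall>j<n. (\<Sum>q<?r. y0 $ q * N $$ (q,j)) = 0"
    unfolding N_def ND
  proof (rule kernel_factor[OF C D y0(1)])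
    show "\<forall>l<R. col C l \<bullet> y0 = 0" using y0(3) C unfolding W_def by (auto simp: cols_def)
  qed
  have zr0: "\<forall>q\<in>(\<lambda>i. d+i) ` Z. y0 $ q = 0"
  proof
    fix q assume "q \<in> (\<lambda>i. d+i) ` Z"
    then obtain i where i: "i \<in> Z" "q = d + i" by auto
    hence "unit_vec ?r q \<bullet> y0 = 0" using y0(3) unfolding W_def by auto
    moreover have "q < ?r" using i Zd by auto
    ultimately show "y0 $ q = 0" using y0(1) by simp
  qed
  obtain Y where Y: "\<forall>q<?r. Y q \<in> K" "\<exists>q<?r. Y q \<noteq> 0" "\<forall>j<n. (\<Sum>q<?r. Y q * N $$ (q,j)) = 0"
      "\<forall>q\<in>(\<lambda>i. d+i) ` Z. Y q = 0"
    using kernel_K[OF Nc NK y0(1,2) ker0 zr0] by blast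
  define u where "u = (\<lambda>l. Y l)"
  define v where "v = (\<lambda>l. Y (d+l))"
  define t where "t = (\<lambda>p. Y (d+d+p))"
  have uK: "\<forall>l<d. u l \<in> K" and vK: "\<forall>l<d. v l \<in> K" and tK: "\<forall>p<m. t p \<in> K"
    using Y(1) unfolding u_def v_def t_def by auto
  have vZ: "\<forall>l\<in>Z. v l = 0" using Y(4) unfolding v_def by auto
  have kerS: "\<forall>j<n. (\<Sum>l<d. u l * A $$ (l,j)) + (\<Sum>l<d. v l * B $$ (l,j)) + (\<Sum>p<m. t p * P $$ (p,j)) = 0"
    using Y(3) N_sum[OF A(1) B(1) P(1), of _ Y] unfolding N_def u_def v_def t_def by auto
  obtain c0 c1 where c: "c0 \<in> K" "c1 \<in> K" "w * w = c0 + w * c1" using dec[of "w*w"] by blast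
  define s where "s = (\<lambda>l. v l - c1 * u l)"
  have sK: "\<forall>l<d. s l \<in> K" using uK vK c unfolding s_def by auto
  define g where "g = (\<lambda>l. s l + w * u l)"
  define \<gamma> where "\<gamma> = (\<lambda>q. if q < d then g q else w * t (q - d))"
  define x where "x = (\<lambda>j. \<Sum>l<d. s l * A $$ (l,j) + c0 * u l * B $$ (l,j))"
  have xK: "\<forall>j<n. x j \<in> K" unfolding x_def using sK uK A B c by (intro allI impI Ksum Kadd Kmult, auto)
  let ?AwB = "A + w \<cdot>\<^sub>m B"
  let ?M = "?AwB @\<^sub>r P"
  have AwB: "?AwB \<in> carrier_mat d n" using A B by auto
  have Mc: "?M \<in> carrier_mat (d+m) n" using AwB P by auto
  have AwBi: "\<And>l j. l < d \<Longrightarrow> j < n \<Longrightarrow> ?AwB $$ (l,j) = A $$ (l,j) + w * B $$ (l,j)"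
    using A B by auto
  have key: "\<forall>j<n. (\<Sum>q<d+m. \<gamma> q * ?M $$ (q,j)) = x j"
  proof (intro allI impI)
    fix j assume j: "j < n"
    have "(\<Sum>q<d+m. \<gamma> q * ?M $$ (q,j)) = (\<Sum>l<d. \<gamma> l * ?AwB $$ (l,j)) + (\<Sum>p<m. \<gamma> (d+p) * P $$ (p,j))"
      by (rule M_sum[OF AwB P(1) j])
    also have "(\<Sum>l<d. \<gamma> l * ?AwB $$ (l,j)) = (\<Sum>l<d. (s l * A $$ (l,j) + c0 * u l * B $$ (l,j))
       + w * (u l * A $$ (l,j) + v l * B $$ (l,j)))"
    proof (rule sum.cong[OF refl])
      fix l assume "l \<in> {..<d}"
      hence l: "l < d" by auto
      have "\<gamma> l * ?AwB $$ (l,j) = (v l - c1 * u l + w * u l) * (A $$ (l,j) + w * B $$ (l,j))"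
        using l j AwBi unfolding \<gamma>_def g_def s_def by auto
      also have "\<dots> = (s l * A $$ (l,j) + c0 * u l * B $$ (l,j)) + w * (u l * A $$ (l,j) + v l * B $$ (l,j))"
        unfolding s_def by (rule alg_id[OF c(3)])
      finally show "\<gamma> l * ?AwB $$ (l,j) = (s l * A $$ (l,j) + c0 * u l * B $$ (l,j)) + w * (u l * A $$ (l,j) + v l * B $$ (l,j))" .
    qed
    also have "\<dots> = x j + w * ((\<Sum>l<d. u l * A $$ (l,j)) + (\<Sum>l<d. v l * B $$ (l,j)))"
      unfolding x_def by (simp add: sum.distrib sum_distrib_left[symmetric] distrib_left)
    also have "(\<Sum>p<m. \<gamma> (d+p) * P $$ (p,j)) = w * (\<Sum>p<m. t p * P $$ (p,j))"
      unfolding \<gamma>_def by (simp add: sum_distrib_left mult.assoc)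
    finally have "(\<Sum>q<d+m. \<gamma> q * ?M $$ (q,j)) = x j + w * ((\<Sum>l<d. u l * A $$ (l,j)) + (\<Sum>l<d. v l * B $$ (l,j)) + (\<Sum>p<m. t p * P $$ (p,j)))"
      by (simp add: algebra_simps)
    thus "(\<Sum>q<d+m. \<gamma> q * ?M $$ (q,j)) = x j" using kerS j by simp
  qed
  have ex_i: "\<exists>i<d. i \<notin> Z \<and> g i \<noteq> 0"
  proof (rule ccontr)
    assume H: "\<not> ?thesis"
    have uv: "\<forall>l<d. l \<notin> Z \<longrightarrow> u l = 0 \<and> v l = 0"
    proof (intro allI impI)
      fix l assume l: "l < d" "l \<notin> Z"
      hence "s l + w * u l = 0" using H unfolding g_def by auto
      hence "s l = 0 \<and> u l = 0" using uniq0 sK uK l by blast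
      thus "u l = 0 \<and> v l = 0" unfolding s_def by auto
    qed
    have v0: "\<forall>l<d. v l = 0" using uv vZ by blast
    define y' where "y' = vec (d+m) (\<lambda>q. if q < d then u q else t (q-d))"
    have "\<forall>j<n. (\<Sum>q<d+m. y' $ q * ?M $$ (q,j)) = 0"
    proof (intro allI impI)
      fix j assume j: "j < n"
      have "(\<Sum>q<d+m. y' $ q * ?M $$ (q,j)) = (\<Sum>q<d+m. (\<lambda>q. if q < d then u q else t (q-d)) q * ?M $$ (q,j))"
        by (rule sum.cong, auto simp: y'_def)
      also have "\<dots> = (\<Sum>l<d. u l * ?AwB $$ (l,j)) + (\<Sum>p<m. t p * P $$ (p,j))"
        by (subst M_sum[OF AwB P(1) j], simp)
      also have "(\<Sum>l<d. u l * ?AwB $$ (l,j)) = (\<Sum>l<d. u l * A $$ (l,j)) + (\<Sum>l<d. v l * B $$ (l,j))"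
      proof -
        have "(\<Sum>l<d. u l * ?AwB $$ (l,j)) = (\<Sum>l<d. u l * A $$ (l,j))"
        proof (rule sum.cong[OF refl])
          fix l assume "l \<in> {..<d}"
          hence l: "l < d" by auto
          have "u l * B $$ (l,j) = 0" using uv BZ l j by (cases "l \<in> Z", auto)
          thus "u l * ?AwB $$ (l,j) = u l * A $$ (l,j)" using AwBi[OF l j]
            by (simp add: algebra_simps)
        qed
        moreover have "(\<Sum>l<d. v l * B $$ (l,j)) = 0" using v0 by auto
        ultimately show ?thesis by simp
      qed
      finally show "(\<Sum>q<d+m. y' $ q * ?M $$ (q,j)) = 0" using kerS j by simp
    qed
    hence "y' = 0\<^sub>v (d+m)" using L Mc unfolding lind_def by (auto simp: y'_def)
    hence y0': "\<And>q. q < d + m \<Longrightarrow> y' $ q = 0" by auto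
    have ut1: "\<forall>l<d. u l = 0"
    proof (intro allI impI)
      fix l assume "l < d" thus "u l = 0" using y0'[of l] by (auto simp: y'_def)
    qed
    have ut2: "\<forall>p<m. t p = 0"
    proof (intro allI impI)
      fix p assume "p < m" thus "t p = 0" using y0'[of "d+p"] by (auto simp: y'_def)
    qed
    note ut = ut1 ut2
    have "\<forall>q<?r. Y q = 0"
    proof (intro allI impI)
      fix q assume q: "q < ?r"
      show "Y q = 0"
      proof (cases "q < d")
        case True thus ?thesis using ut unfolding u_def by auto
      next
        case F1: False
        show ?thesis
        proof (cases "q < d + d")
          case True thus ?thesis using v0 F1 unfolding v_def
            by (metis add_diff_inverse_nat add_less_imp_less_left)
        next
          case False thus ?thesis using ut(2) q unfolding t_def
            by (metis add_diff_inverse_nat add_less_imp_less_left)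
        qed
      qed
    qed
    thus False using Y(2) by auto
  qed
  then obtain i where i: "i < d" "i \<notin> Z" "g i \<noteq> 0" by blast
  define A1 where "A1 = mat d n (\<lambda>(p,j). if p = i then x j else A $$ (p,j))"
  define B1 where "B1 = mat d n (\<lambda>(p,j). if p = i then 0 else B $$ (p,j))"
  have A1c: "A1 \<in> carrier_mat d n" and B1c: "B1 \<in> carrier_mat d n" unfolding A1_def B1_def by auto
  have A1K: "\<forall>p<d. \<forall>j<n. A1 $$ (p,j) \<in> K" unfolding A1_def using A xK by auto
  have B1K: "\<forall>p<d. \<forall>j<n. B1 $$ (p,j) \<in> K" unfolding B1_def using B by auto
  have A1wB1: "A1 + w \<cdot>\<^sub>m B1 \<in> carrier_mat d n" using A1c B1c by auto
  have M1c: "(A1 + w \<cdot>\<^sub>m B1) @\<^sub>r P \<in> carrier_mat (d+m) n" using A1wB1 P by auto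
  have M1: "repl_row ?M i \<gamma> = (A1 + w \<cdot>\<^sub>m B1) @\<^sub>r P"
  proof (rule eq_matI)
    fix p j assume "p < dim_row ((A1 + w \<cdot>\<^sub>m B1) @\<^sub>r P)" "j < dim_col ((A1 + w \<cdot>\<^sub>m B1) @\<^sub>r P)"
    hence pj: "p < d + m" "j < n" using M1c by auto
    have "repl_row ?M i \<gamma> $$ (p,j) = (if p = i then (\<Sum>q<d+m. \<gamma> q * ?M $$ (q,j)) else ?M $$ (p,j))"
      unfolding repl_row_def using Mc pj by auto
    also have "\<dots> = (if p = i then x j else ?M $$ (p,j))" using key pj by auto
    also have "\<dots> = ((A1 + w \<cdot>\<^sub>m B1) @\<^sub>r P) $$ (p,j)"
      using pj i unfolding M_index[OF AwB P(1) pj] M_index[OF A1wB1 P(1) pj]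
      using A1c B1c A B by (auto simp: A1_def B1_def)
    finally show "repl_row ?M i \<gamma> $$ (p,j) = ((A1 + w \<cdot>\<^sub>m B1) @\<^sub>r P) $$ (p,j)" .
  qed (insert Mc M1c, auto simp: repl_row_def)
  have gi: "\<gamma> i \<noteq> 0" using i unfolding \<gamma>_def by auto
  have id: "i < d + m" using i by auto
  have req: "row_equivalent ?M ((A1 + w \<cdot>\<^sub>m B1) @\<^sub>r P)"
    using row_replace[OF Mc id, of \<gamma>, OF gi] M1 by simp
  have lind1: "lind ((A1 + w \<cdot>\<^sub>m B1) @\<^sub>r P)"
    using lind_replace[OF Mc id, of \<gamma>, OF gi L] M1 by simp
  define C1 where "C1 = mat ?r R (\<lambda>(p,l). if p = i then (\<Sum>q<d. s q * C $$ (q,l) + c0 * u q * C $$ (d+q,l))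
     else if p = d + i then 0 else C $$ (p,l))"
  have C1c: "C1 \<in> carrier_mat ?r R" unfolding C1_def by auto
  have NCD: "\<forall>q<?r. \<forall>j<n. N $$ (q,j) = (\<Sum>l<R. C $$ (q,l) * D $$ (l,j))"
    unfolding N_def ND using C D by (auto simp: scalar_prod_def atLeast0LessThan)
  have N1c: "A1 @\<^sub>r B1 @\<^sub>r P \<in> carrier_mat ?r n" using A1c B1c P
    by (metis add.assoc carrier_append_rows)
  have NC1: "A1 @\<^sub>r B1 @\<^sub>r P = C1 * D"
  proof (rule eq_matI)
    fix p j assume "p < dim_row (C1 * D)" "j < dim_col (C1 * D)"
    hence pj: "p < ?r" "j < n" using C1c D by auto
    have rhs: "(C1 * D) $$ (p,j) = (\<Sum>l<R. C1 $$ (p,l) * D $$ (l,j))"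
      using C1c D pj by (auto simp: scalar_prod_def atLeast0LessThan)
    show "(A1 @\<^sub>r B1 @\<^sub>r P) $$ (p,j) = (C1 * D) $$ (p,j)"
    proof (cases "p = i")
      case True
      have "(\<Sum>l<R. C1 $$ (p,l) * D $$ (l,j)) = (\<Sum>l<R. \<Sum>q<d. s q * (C $$ (q,l) * D $$ (l,j)) + c0 * u q * (C $$ (d+q,l) * D $$ (l,j)))"
      proof (rule sum.cong[OF refl])
        fix l assume "l \<in> {..<R}"
        hence l: "l < R" by auto
        have "C1 $$ (p,l) = (\<Sum>q<d. s q * C $$ (q,l) + c0 * u q * C $$ (d+q,l))"
          using True l i unfolding C1_def by auto
        hence "C1 $$ (p,l) * D $$ (l,j) = (\<Sum>q<d. (s q * C $$ (q,l) + c0 * u q * C $$ (d+q,l)) * D $$ (l,j))"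
          by (simp only: sum_distrib_right)
        also have "\<dots> = (\<Sum>q<d. s q * (C $$ (q,l) * D $$ (l,j)) + c0 * u q * (C $$ (d+q,l) * D $$ (l,j)))"
          by (intro sum.cong refl, simp add: algebra_simps)
        finally show "C1 $$ (p,l) * D $$ (l,j) = (\<Sum>q<d. s q * (C $$ (q,l) * D $$ (l,j)) + c0 * u q * (C $$ (d+q,l) * D $$ (l,j)))" .
      qed
      also have "\<dots> = (\<Sum>q<d. \<Sum>l<R. s q * (C $$ (q,l) * D $$ (l,j)) + c0 * u q * (C $$ (d+q,l) * D $$ (l,j)))"
        by (rule sum.swap)
      also have "\<dots> = (\<Sum>q<d. s q * N $$ (q,j) + c0 * u q * N $$ (d+q,j))"
        using NCD pj by (auto simp: sum.distrib sum_distrib_left intro!: sum.cong)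
      also have "\<dots> = x j" unfolding x_def N_def
        using N_index[OF A(1) B(1) P(1) _ pj(2)] by (auto intro!: sum.cong)
      moreover have "(A1 @\<^sub>r B1 @\<^sub>r P) $$ (p,j) = A1 $$ (p,j)"
        using N_index[OF A1c B1c P(1) pj] True i by simp
      moreover have "A1 $$ (p,j) = x j" using True i pj unfolding A1_def by simp
      ultimately show ?thesis using rhs by simp
    next
      case ni: False
      show ?thesis
      proof (cases "p = d + i")
        case True
        have "(\<Sum>l<R. C1 $$ (p,l) * D $$ (l,j)) = 0"
          using True ni pj by (intro sum.neutral ballI, auto simp: C1_def)
        hence "(C1 * D) $$ (p,j) = 0" using rhs by simp
        moreover have "(A1 @\<^sub>r B1 @\<^sub>r P) $$ (p,j) = B1 $$ (i,j)"
          using N_index[OF A1c B1c P(1) pj] True i by simp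
        moreover have "B1 $$ (i,j) = 0" using i pj unfolding B1_def by simp
        ultimately show ?thesis by simp
      next
        case False
        have "(\<Sum>l<R. C1 $$ (p,l) * D $$ (l,j)) = (\<Sum>l<R. C $$ (p,l) * D $$ (l,j))"
          using ni False pj by (intro sum.cong refl, auto simp: C1_def)
        hence "(C1 * D) $$ (p,j) = N $$ (p,j)" using rhs NCD pj by simp
        also have "\<dots> = (A1 @\<^sub>r B1 @\<^sub>r P) $$ (p,j)"
          unfolding N_def N_index[OF A1c B1c P(1) pj] N_index[OF A(1) B(1) P(1) pj]
          using ni False pj i unfolding A1_def B1_def by auto
        finally show ?thesis by simp
      qed
    qed
  qed (insert N1c C1c D, auto)
  have Z1: "{l. l<d \<and> row B1 l = 0\<^sub>v n} = insert i Z"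
  proof -
    have "row B1 l = 0\<^sub>v n \<longleftrightarrow> (l = i \<or> row B l = 0\<^sub>v n)" if l: "l < d" for l
    proof -
      have "row B1 l = 0\<^sub>v n \<longleftrightarrow> (\<forall>j<n. B1 $$ (l,j) = 0)"
        using l B1c by (auto simp: vec_eq_iff)
      moreover have "row B l = 0\<^sub>v n \<longleftrightarrow> (\<forall>j<n. B $$ (l,j) = 0)"
        using l B(1) by (auto simp: vec_eq_iff)
      moreover have "(\<forall>j<n. B1 $$ (l,j) = 0) \<longleftrightarrow> (l = i \<or> (\<forall>j<n. B $$ (l,j) = 0))"
        using l unfolding B1_def by auto
      ultimately show ?thesis by simp
    qed
    thus ?thesis unfolding Z_def using i by auto
  qed
  have "card {l. l<d \<and> row B1 l = 0\<^sub>v n} = Suc (card Z)" unfolding Z1 using Zfin i by auto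
  thus ?thesis unfolding Z_def
    using A1c A1K B1c B1K lind1 C1c NC1 req by blast
qed

end


context d2ext
begin

lemma iter:
  fixes P :: "'a mat" and d m n :: nat
  assumes P: "P \<in> carrier_mat m n" "\<forall>i<m. \<forall>j<n. P $$ (i,j) \<in> K"
  shows "A \<in> carrier_mat d n \<Longrightarrow> (\<forall>i<d. \<forall>j<n. A $$ (i,j) \<in> K) \<Longrightarrow>
     B \<in> carrier_mat d n \<Longrightarrow> (\<forall>i<d. \<forall>j<n. B $$ (i,j) \<in> K) \<Longrightarrow>
     lind ((A + w \<cdot>\<^sub>m B) @\<^sub>r P) \<Longrightarrow> C \<in> carrier_mat (d+d+m) R \<Longrightarrow> D \<in> carrier_mat R n \<Longrightarrow>
     A @\<^sub>r B @\<^sub>r P = C * D \<Longrightarrow> R + card {i. i<d \<and> row B i = 0\<^sub>v n} + k \<le> d+d+m \<Longrightarrow>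
     (\<exists>A' B'. A' \<in> carrier_mat d n \<and> (\<forall>i<d. \<forall>j<n. A' $$ (i,j) \<in> K) \<and>
       B' \<in> carrier_mat d n \<and> (\<forall>i<d. \<forall>j<n. B' $$ (i,j) \<in> K) \<and>
       row_equivalent ((A + w \<cdot>\<^sub>m B) @\<^sub>r P) ((A' + w \<cdot>\<^sub>m B') @\<^sub>r P) \<and>
       card {i. i<d \<and> row B i = 0\<^sub>v n} + k \<le> card {i. i<d \<and> row B' i = 0\<^sub>v n})"
proof (induction k arbitrary: A B C D R)
  case 0
  have "row_equivalent ((A + w \<cdot>\<^sub>m B) @\<^sub>r P) ((A + w \<cdot>\<^sub>m B) @\<^sub>r P)"
    unfolding row_equivalent_def by simp
  thus ?case using "0.prems"(1-4) by auto
next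
  case (Suc k)
  note H = Suc.prems
  have cnt: "R + card {i. i<d \<and> row B i = 0\<^sub>v n} < d+d+m" using H(9) by auto
  obtain A1 B1 C1 where S: "A1 \<in> carrier_mat d n" "(\<forall>i<d. \<forall>j<n. A1 $$ (i,j) \<in> K)"
     "B1 \<in> carrier_mat d n" "(\<forall>i<d. \<forall>j<n. B1 $$ (i,j) \<in> K)"
     "lind ((A1 + w \<cdot>\<^sub>m B1) @\<^sub>r P)" "C1 \<in> carrier_mat (d+d+m) R" "A1 @\<^sub>r B1 @\<^sub>r P = C1 * D"
     "row_equivalent ((A + w \<cdot>\<^sub>m B) @\<^sub>r P) ((A1 + w \<cdot>\<^sub>m B1) @\<^sub>r P)"
     "card {i. i<d \<and> row B1 i = 0\<^sub>v n} = Suc (card {i. i<d \<and> row B i = 0\<^sub>v n})"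
    using one_step[OF H(1,2,3,4) P H(5,6,7,8) cnt] by blast
  have "R + card {i. i<d \<and> row B1 i = 0\<^sub>v n} + k \<le> d+d+m" using S(9) H(9) by simp
  from Suc.IH[OF S(1-5) S(6) H(7) S(7) this]
  obtain A' B' where R: "A' \<in> carrier_mat d n" "(\<forall>i<d. \<forall>j<n. A' $$ (i,j) \<in> K)"
       "B' \<in> carrier_mat d n" "(\<forall>i<d. \<forall>j<n. B' $$ (i,j) \<in> K)"
       "row_equivalent ((A1 + w \<cdot>\<^sub>m B1) @\<^sub>r P) ((A' + w \<cdot>\<^sub>m B') @\<^sub>r P)"
       "card {i. i<d \<and> row B1 i = 0\<^sub>v n} + k \<le> card {i. i<d \<and> row B' i = 0\<^sub>v n}"
    by blast
  have "row_equivalent ((A + w \<cdot>\<^sub>m B) @\<^sub>r P) ((A' + w \<cdot>\<^sub>m B') @\<^sub>r P)"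
    using S(8) R(5) unfolding row_equivalent_def by (rule rtranclp_trans)
  moreover have "card {i. i<d \<and> row B i = 0\<^sub>v n} + Suc k \<le> card {i. i<d \<and> row B' i = 0\<^sub>v n}"
    using R(6) S(9) by simp
  ultimately show ?case using R(1-4) by blast
qed

end

theorem lemma3p4:
  fixes K :: "'a::field set" and w :: 'a
    and h d m n :: nat
    and A B P :: "'a mat"
  assumes ext: "degree2_extension K w"
    and hd: "h \<le> d" and dn: "d \<le> n"
    and A: "A \<in> carrier_mat d n" "elements_mat A \<subseteq> K"
    and B: "B \<in> carrier_mat d n" "elements_mat B \<subseteq> K"
    and P: "P \<in> carrier_mat m n" "elements_mat P \<subseteq> K"
    and r1: "mrank ((A + w \<cdot>\<^sub>m B) @\<^sub>r P) = m + d"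
    and r2: "mrank P = m"
    and r3: "mrank (A @\<^sub>r B @\<^sub>r P) \<le> m + 2 * d - h"
  shows "\<exists>A' B'. A' \<in> carrier_mat d n \<and> elements_mat A' \<subseteq> K \<and>
                B' \<in> carrier_mat d n \<and> elements_mat B' \<subseteq> K \<and>
                row_equivalent ((A + w \<cdot>\<^sub>m B) @\<^sub>r P) ((A' + w \<cdot>\<^sub>m B') @\<^sub>r P) \<and>
                card {i. i < d \<and> row B' i = 0\<^sub>v n} \<ge> h"
proof -
  interpret d2ext K w by (unfold_locales, rule ext)
  have AK: "\<forall>i<d. \<forall>j<n. A $$ (i,j) \<in> K" using A elements_sub_iff by blast
  have BK: "\<forall>i<d. \<forall>j<n. B $$ (i,j) \<in> K" using B elements_sub_iff by blast
  have PK: "\<forall>i<m. \<forall>j<n. P $$ (i,j) \<in> K" using P elements_sub_iff by blast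
  have Mc: "(A + w \<cdot>\<^sub>m B) @\<^sub>r P \<in> carrier_mat (d+m) n" using A B P by auto
  have L: "lind ((A + w \<cdot>\<^sub>m B) @\<^sub>r P)" using full_rank_lind[OF Mc] r1 by simp
  have Nc: "A @\<^sub>r B @\<^sub>r P \<in> carrier_mat (d+d+m) n" using A B P
    by (metis add.assoc carrier_append_rows)
  obtain R C D where CD: "R \<le> mrank (A @\<^sub>r B @\<^sub>r P)" "C \<in> carrier_mat (d+d+m) R" "D \<in> carrier_mat R n"
    "A @\<^sub>r B @\<^sub>r P = C * D" using rank_fact[OF Nc] by blast
  let ?z = "card {i. i < d \<and> row B i = 0\<^sub>v n}"
  show ?thesis
  proof (cases "h \<le> ?z")
    case True
    have "row_equivalent ((A + w \<cdot>\<^sub>m B) @\<^sub>r P) ((A + w \<cdot>\<^sub>m B) @\<^sub>r P)"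
      unfolding row_equivalent_def by simp
    thus ?thesis using A B True by blast
  next
    case False
    have "R + ?z + (h - ?z) \<le> d+d+m" using CD(1) r3 hd False by linarith
    then obtain A' B' where R: "A' \<in> carrier_mat d n" "(\<forall>i<d. \<forall>j<n. A' $$ (i,j) \<in> K)"
       "B' \<in> carrier_mat d n" "(\<forall>i<d. \<forall>j<n. B' $$ (i,j) \<in> K)"
       "row_equivalent ((A + w \<cdot>\<^sub>m B) @\<^sub>r P) ((A' + w \<cdot>\<^sub>m B') @\<^sub>r P)"
       "?z + (h - ?z) \<le> card {i. i<d \<and> row B' i = 0\<^sub>v n}"
      using iter[OF P(1) PK A(1) AK B(1) BK L CD(2,3,4) \<open>R + ?z + (h - ?z) \<le> d+d+m\<close>] by blast
    have "elements_mat A' \<subseteq> K" "elements_mat B' \<subseteq> K"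
      using R elements_sub_iff by blast+
    thus ?thesis using R False by auto
  qed
qed


end
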